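(* Let $\mathcal{L}$ be a complex linear subspace of dimension $\delta$ of the space of complex symmetric $\delta\times\delta$ matrices such that $\mathcal{L}\not\subset sl(\delta,\mathbb{C})$ (i.e. some element of $\mathcal{L}$ has nonzero trace). Then there exists $S\in O(\delta,\mathbb{C})$ such that the restriction of $\pi$ to $S\mathcal{L}S^{-1}=\{SLS^{-1}:L\in\mathcal{L}\}$ is a bijection onto $\mathbb{C}^\delta$.
   Context: $\pi(A)=(a_{11},\dots,a_{\delta\delta})$ denotes the vector of diagonal entries of a $\delta\times\delta$ matrix $A$. $sl(\delta,\mathbb{C})$ is the space of trace-zero $\delta\times\delta$ complex matrices. $O(\delta,\mathbb{C})=\{S: SS^t=I\}$. *)

theory Defs
  imports "HOL-Analysis.Analysis"
begin

definition cmscale :: "complex \<Rightarrow> complex^'n^'n \<Rightarrow> complex^'n^'n" where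
  "cmscale c A = (\<chi> i j. c * A $ i $ j)"

lemma cmscale_vector_space: "Vector_Spaces.vector_space cmscale"
  by unfold_locales (simp_all add: cmscale_def vec_eq_iff algebra_simps)

interpretation cmat: vector_space "cmscale :: complex \<Rightarrow> complex^'n^'n \<Rightarrow> complex^'n^'n"
  by (rule cmscale_vector_space)

definition diag_vec :: "'a^'n^'n \<Rightarrow> 'a^'n" where
  "diag_vec A = (\<chi> i. A $ i $ i)"

definition symmetric_mat :: "'a^'n^'n \<Rightarrow> bool" where
  "symmetric_mat A \<longleftrightarrow> transpose A = A"

definition complex_orthogonal :: "complex^'n^'n \<Rightarrow> bool" where
  "complex_orthogonal S \<longleftrightarrow> S ** transpose S = mat 1"

end

theory Submission
  imports Defs
begin


definition vscale :: "complex \<Rightarrow> complex^'n \<Rightarrow> complex^'n" where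
  "vscale c x = (\<chi> i. c * x $ i)"

lemma vscale_vector_space: "Vector_Spaces.vector_space vscale"
  by unfold_locales (simp_all add: vscale_def vec_eq_iff algebra_simps)

interpretation cv: vector_space "vscale :: complex \<Rightarrow> complex^'n \<Rightarrow> complex^'n"
  by (rule vscale_vector_space)

lemma vscale_nth[simp]: "vscale c x $ i = c * x $ i"
  by (simp add: vscale_def)

lemma cmscale_nth[simp]: "cmscale c A $ i $ j = c * A $ i $ j"
  by (simp add: cmscale_def)

lemma cv_sum_nth: "(sum f A) $ i = sum (\<lambda>x. f x $ i) A"
  by (induct A rule: infinite_finite_induct) auto

lemma cv_independent_axis:
  "cv.independent (range (\<lambda>i::'n::finite. axis i (1::complex)))"
proof (rule cv.independent_if_scalars_zero)
  show "finite (range (\<lambda>i::'n::finite. axis i (1::complex)))" by simp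
  fix f :: "complex^'n \<Rightarrow> complex" and x
  assume s: "(\<Sum>x\<in>range (\<lambda>i::'n::finite. axis i (1::complex)). vscale (f x) x) = 0"
    and x: "x \<in> range (\<lambda>i::'n::finite. axis i (1::complex))"
  then obtain k where k: "x = axis k 1" by auto
  have inj: "inj (\<lambda>i::'n::finite. axis i (1::complex))"
    by (auto simp: inj_def axis_eq_axis)
  have "0 = (\<Sum>x\<in>range (\<lambda>i::'n::finite. axis i (1::complex)). vscale (f x) x) $ k"
    using s by simp
  also have "\<dots> = (\<Sum>i\<in>UNIV. vscale (f (axis i 1)) (axis i (1::complex)) $ k)"
    by (simp add: cv_sum_nth sum.reindex[OF inj])
  also have "\<dots> = f (axis k 1)"
    by (simp add: axis_def if_distrib cong: if_cong)
  finally show "f x = 0" using k by simp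
qed

lemma cv_span_axis:
  "cv.span (range (\<lambda>i::'n::finite. axis i (1::complex))) = UNIV"
proof -
  { fix x :: "complex^'n"
    have "x = (\<Sum>i\<in>UNIV. vscale (x $ i) (axis i 1))"
      by (simp add: vec_eq_iff cv_sum_nth axis_def if_distrib cong: if_cong)
    also have "\<dots> \<in> cv.span (range (\<lambda>i::'n::finite. axis i (1::complex)))"
      by (intro cv.span_sum cv.span_scale cv.span_base) auto
    finally have "x \<in> cv.span (range (\<lambda>i::'n::finite. axis i (1::complex)))" . }
  then show ?thesis by auto
qed

lemma cv_fin: "finite_dimensional_vector_space vscale (range (\<lambda>i::'n::finite. axis i (1::complex)))"
  by unfold_locales (simp_all add: cv_independent_axis cv_span_axis)

interpretation cvf: finite_dimensional_vector_space
  "vscale :: complex \<Rightarrow> complex^'n \<Rightarrow> complex^'n" "range (\<lambda>i::'n::finite. axis i (1::complex))"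
  by (rule cv_fin)


lemma card_axis: "card (range (\<lambda>i::'n::finite. axis i (1::complex))) = CARD('n)"
  by (rule card_image) (auto simp: inj_on_def axis_eq_axis)

lemma diag_linear: "Vector_Spaces.linear cmscale vscale (diag_vec :: complex^'n^'n \<Rightarrow> complex^'n)"
  by unfold_locales (simp_all add: diag_vec_def vec_eq_iff)

interpretation dg: Vector_Spaces.linear cmscale vscale "diag_vec :: complex^'n^'n \<Rightarrow> complex^'n"
  by (rule diag_linear)



definition cj :: "complex^'n^'n \<Rightarrow> complex^'n^'n \<Rightarrow> complex^'n^'n" where
  "cj S A = S ** A ** transpose S"

lemma orth_left: "complex_orthogonal S \<Longrightarrow> transpose S ** S = mat 1"
  by (simp add: complex_orthogonal_def matrix_left_right_inverse)

lemma orth_mult: "complex_orthogonal S \<Longrightarrow> complex_orthogonal T \<Longrightarrow> complex_orthogonal (S ** T)"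
  unfolding complex_orthogonal_def
  by (metis matrix_transpose_mul matrix_mul_assoc matrix_mul_rid)

lemma orth_one: "complex_orthogonal (mat 1)"
  by (simp add: complex_orthogonal_def transpose_mat)

lemma orth_inv: "complex_orthogonal S \<Longrightarrow> matrix_inv S = transpose S"
proof -
  assume o: "complex_orthogonal S"
  have ex: "\<exists>A'. S ** A' = mat 1 \<and> A' ** S = mat 1"
    using o orth_left[OF o] by (auto simp: complex_orthogonal_def)
  have "S ** matrix_inv S = mat 1 \<and> matrix_inv S ** S = mat 1"
    unfolding matrix_inv_def by (rule someI_ex[OF ex])
  then have "matrix_inv S = (transpose S ** S) ** matrix_inv S"
    using orth_left[OF o] by simp
  also have "\<dots> = transpose S ** (S ** matrix_inv S)"
    by (simp add: matrix_mul_assoc)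
  also have "\<dots> = transpose S"
    using \<open>S ** matrix_inv S = mat 1 \<and> _\<close> by simp
  finally show ?thesis .
qed

lemma mult_cmscale_right: "(S::complex^'n^'n) ** cmscale c A = cmscale c (S ** A)"
  by (simp add: vec_eq_iff matrix_matrix_mult_def sum_distrib_left mult_ac)

lemma mult_cmscale_left: "cmscale c (A::complex^'n^'n) ** S = cmscale c (A ** S)"
  by (simp add: vec_eq_iff matrix_matrix_mult_def sum_distrib_left mult_ac)

lemma matrix_add_rdistrib': "((B + C) ** A) = (B ** A) + (C ** A)"
  by (simp add: matrix_matrix_mult_def vec_eq_iff sum.distrib distrib_right)

lemma cj_linear: "Vector_Spaces.linear cmscale cmscale (cj S)"
  by unfold_locales
    (simp_all add: cj_def matrix_add_ldistrib matrix_add_rdistrib' mult_cmscale_right mult_cmscale_left)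

lemma cj_cj: "cj S (cj T A) = cj (S ** T) A"
  by (simp add: cj_def matrix_transpose_mul matrix_mul_assoc)

lemma cj_inv: "complex_orthogonal S \<Longrightarrow> cj (transpose S) (cj S A) = A"
  unfolding cj_cj by (simp add: orth_left cj_def transpose_mat matrix_transpose_mul)

lemma cj_sym: "symmetric_mat A \<Longrightarrow> symmetric_mat (cj S A)"
  by (simp add: symmetric_mat_def cj_def matrix_transpose_mul matrix_mul_assoc)

lemma cj_trace: "complex_orthogonal S \<Longrightarrow> trace (cj S A) = trace A"
proof -
  assume o: "complex_orthogonal S"
  have "trace (cj S A) = trace (S ** (A ** transpose S))"
    by (simp add: cj_def matrix_mul_assoc)
  also have "\<dots> = trace ((A ** transpose S) ** S)" by (rule trace_mul_sym)
  also have "\<dots> = trace A" by (simp add: matrix_mul_assoc[symmetric] orth_left[OF o])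
  finally show ?thesis .
qed

lemma cj_inj: "complex_orthogonal S \<Longrightarrow> inj (cj S)"
  by (metis cj_inv injI)

lemma cj_subspace: "cmat.subspace L \<Longrightarrow> cmat.subspace (cj S ` L)"
proof -
  interpret l: Vector_Spaces.linear cmscale cmscale "cj S" by (rule cj_linear)
  show "cmat.subspace L \<Longrightarrow> cmat.subspace (cj S ` L)" by (rule l.subspace_image)
qed

lemma cj_dim: "complex_orthogonal S \<Longrightarrow> cmat.dim (cj S ` L) = cmat.dim L"
proof -
  assume o: "complex_orthogonal S"
  interpret l: Vector_Spaces.linear cmscale cmscale "cj S" by (rule cj_linear)
  obtain B where B: "B \<subseteq> L" "cmat.independent B" "L \<subseteq> cmat.span B" "card B = cmat.dim L"
    using cmat.basis_exists by blast
  have inj: "inj (cj S)" by (rule cj_inj[OF o])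
  have "cmat.independent (cj S ` B)"
    using l.independent_injective_image[OF B(2)] inj by (auto simp: inj_on_def)
  moreover have "cj S ` B \<subseteq> cj S ` L" using B(1) by auto
  moreover have "cj S ` L \<subseteq> cmat.span (cj S ` B)"
    using B(3) by (auto simp: l.span_image)
  ultimately have "card (cj S ` B) = cmat.dim (cj S ` L)"
    by (rule cmat.basis_card_eq_dim[rotated -1])
  moreover have "card (cj S ` B) = card B"
    using inj by (simp add: card_image inj_on_subset)
  ultimately show ?thesis using B(4) by simp
qed



definition rot :: "'n::finite \<Rightarrow> 'n \<Rightarrow> complex \<Rightarrow> complex \<Rightarrow> complex^'n^'n" where
  "rot p q c s = (\<chi> a b. if a = p then (if b = p then c else if b = q then s else 0)
     else if a = q then (if b = p then - s else if b = q then c else 0)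
     else (if b = a then 1 else 0))"

lemma sum_two:
  fixes x y :: "'a::comm_monoid_add"
  assumes "p \<noteq> q"
  shows "(\<Sum>k\<in>(UNIV::'n::finite set). (if k = p then x else if k = q then y else 0)) = x + y"
proof -
  have "(\<Sum>k\<in>(UNIV::'n set). (if k = p then x else if k = q then y else 0))
      = (\<Sum>k\<in>(UNIV::'n set). (if k = p then x else 0) + (if k = q then y else 0))"
    by (rule sum.cong) (use assms in auto)
  also have "\<dots> = x + y" by (simp add: sum.distrib)
  finally show ?thesis .
qed

lemma sum_one:
  fixes x :: "'a::comm_monoid_add"
  shows "(\<Sum>k\<in>(UNIV::'n::finite set). (if k = a then x else 0)) = x"
  by simp

lemma sum_two_mult:
  fixes x y :: "'a::comm_semiring_0"
  assumes "p \<noteq> q"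
  shows "(\<Sum>k\<in>(UNIV::'n::finite set). (if k = p then x else if k = q then y else 0) * f k) = x * f p + y * f q"
proof -
  have "(\<Sum>k\<in>(UNIV::'n set). (if k = p then x else if k = q then y else 0) * f k)
      = (\<Sum>k\<in>(UNIV::'n set). (if k = p then x * f p else if k = q then y * f q else 0))"
    by (rule sum.cong) auto
  also have "\<dots> = x * f p + y * f q" by (rule sum_two[OF assms])
  finally show ?thesis .
qed

lemma sum_one_mult:
  fixes f :: "'n::finite \<Rightarrow> 'a::comm_semiring_1"
  shows "(\<Sum>k\<in>(UNIV::'n::finite set). (if k = a then 1 else 0) * f k) = f a"
proof -
  have "(\<Sum>k\<in>(UNIV::'n set). (if k = a then 1 else 0) * f k) = (\<Sum>k\<in>(UNIV::'n set). (if k = a then f a else 0))"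
    by (rule sum.cong) auto
  then show ?thesis by simp
qed

lemma rot_row_p: "rot p q c s $ p $ k = (if k = p then c else if k = q then s else 0)"
  by (simp add: rot_def)
lemma rot_row_q: "p \<noteq> q \<Longrightarrow> rot p q c s $ q $ k = (if k = p then - s else if k = q then c else 0)"
  by (simp add: rot_def)
lemma rot_row_o: "a \<noteq> p \<Longrightarrow> a \<noteq> q \<Longrightarrow> rot p q c s $ a $ k = (if k = a then 1 else 0)"
  by (simp add: rot_def eq_commute)

lemma rot_left:
  assumes "p \<noteq> q"
  shows "(rot p q c s ** M) $ a $ b = (if a = p then c * M$p$b + s * M$q$b
     else if a = q then - s * M$p$b + c * M$q$b else M$a$b)"
proof -
  have e: "(rot p q c s ** M) $ a $ b = (\<Sum>k\<in>UNIV. rot p q c s $ a $ k * M $ k $ b)"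
    by (simp add: matrix_matrix_mult_def)
  show ?thesis
  proof (cases "a = p")
    case True
    then show ?thesis using e sum_two_mult[OF assms, of c s "\<lambda>k. M$k$b"] by (simp add: rot_row_p)
  next
    case False
    show ?thesis
    proof (cases "a = q")
      case True
      then show ?thesis using e
        sum_two_mult[OF assms, of "-s" c "\<lambda>k. M$k$b"] assms False by (simp add: rot_row_q)
    next
      case F2: False
      then show ?thesis unfolding e rot_row_o[OF False F2] using False F2
        sum_one_mult[of a "\<lambda>k. M$k$b"] by simp
    qed
  qed
qed

lemma rot_right:
  assumes "p \<noteq> q"
  shows "(M ** transpose (rot p q c s)) $ a $ b = (if b = p then c * M$a$p + s * M$a$q
     else if b = q then - s * M$a$p + c * M$a$q else M$a$b)"
proof -
  have e: "(M ** transpose (rot p q c s)) $ a $ b = (\<Sum>k\<in>UNIV. rot p q c s $ b $ k * M $ a $ k)"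
    by (simp add: matrix_matrix_mult_def transpose_def mult.commute)
  show ?thesis
  proof (cases "b = p")
    case True
    then show ?thesis using e sum_two_mult[OF assms, of c s "\<lambda>k. M$a$k"] by (simp add: rot_row_p)
  next
    case False
    show ?thesis
    proof (cases "b = q")
      case True
      then show ?thesis using e
        sum_two_mult[OF assms, of "-s" c "\<lambda>k. M$a$k"] assms False by (simp add: rot_row_q)
    next
      case F2: False
      then show ?thesis unfolding e rot_row_o[OF False F2] using False F2
        sum_one_mult[of b "\<lambda>k. M$a$k"] by simp
    qed
  qed
qed

lemma rot_orth:
  assumes "p \<noteq> q" "c * c + s * s = 1"
  shows "complex_orthogonal (rot p q c s)"
  unfolding complex_orthogonal_def
proof (rule vec_eq_iff[THEN iffD2], intro allI, rule vec_eq_iff[THEN iffD2], intro allI)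
  fix a b
  show "(rot p q c s ** transpose (rot p q c s)) $ a $ b = mat 1 $ a $ b"
    unfolding rot_right[OF assms(1)] using assms
    by (cases "a = p"; cases "a = q"; cases "b = p"; cases "b = q")
      (simp_all add: rot_row_p rot_row_q rot_row_o mat_def mult.commute add.commute)
qed



definition cc :: complex where "cc = complex_of_real (1 / sqrt 2)"

lemma cc_sq: "cc * cc = 1/2"
proof -
  have "cc * cc = complex_of_real (1 / sqrt 2 * (1 / sqrt 2))"
    by (simp only: cc_def of_real_mult)
  also have "1 / sqrt 2 * (1 / sqrt 2) = (1/2::real)"
    by (simp add: divide_simps)
  finally show ?thesis by (simp only: of_real_divide of_real_1 of_real_numeral)
qed

lemma cc_nz: "cc \<noteq> 0"
  using cc_sq by auto

definition R :: "complex \<Rightarrow> 'n::finite \<Rightarrow> 'n \<Rightarrow> complex^'n^'n" where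
  "R e p q = rot p q cc (e * cc)"

lemma R_orth: "p \<noteq> q \<Longrightarrow> e * e = 1 \<Longrightarrow> complex_orthogonal (R e p q)"
  unfolding R_def
proof (rule rot_orth)
  assume "p \<noteq> q" "e * e = 1"
  then show "p \<noteq> q" by simp
  have "cc * cc + e * cc * (e * cc) = (cc * cc) * (1 + e * e)" by (simp add: algebra_simps)
  also have "\<dots> = 1" using \<open>e * e = 1\<close> by (simp add: cc_sq)
  finally show "cc * cc + e * cc * (e * cc) = 1" .
qed

definition uv :: "'n::finite \<Rightarrow> 'n \<Rightarrow> complex^'n" where
  "uv p q = (\<chi> k. if k = p then 1 else if k = q then -1 else 0)"

definition lf :: "complex \<Rightarrow> 'n::finite \<Rightarrow> 'n \<Rightarrow> complex^'n^'n \<Rightarrow> complex" where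
  "lf e p q A = (A$q$q - A$p$p) / 2 + e * A$p$q"

lemma cj_R_pp:
  assumes "p \<noteq> q"
  shows "cj (R e p q) A $ p $ p = cc * (cc * A$p$p + (e*cc) * A$q$p) + (e*cc) * (cc * A$p$q + (e*cc) * A$q$q)"
  unfolding cj_def R_def rot_right[OF assms] rot_left[OF assms] using assms by simp

lemma cj_R_qq:
  assumes "p \<noteq> q"
  shows "cj (R e p q) A $ q $ q = - (e*cc) * (- (e*cc) * A$p$p + cc * A$q$p) + cc * (- (e*cc) * A$p$q + cc * A$q$q)"
  unfolding cj_def R_def rot_right[OF assms] rot_left[OF assms] using assms by simp

lemma cj_R_oo:
  assumes "p \<noteq> q" "a \<noteq> p" "a \<noteq> q" "b \<noteq> p" "b \<noteq> q"
  shows "cj (R e p q) A $ a $ b = A $ a $ b"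
  unfolding cj_def R_def rot_right[OF assms(1)] rot_left[OF assms(1)] using assms by simp

lemma cj_R_qo:
  assumes "p \<noteq> q" "b \<noteq> p" "b \<noteq> q"
  shows "cj (R e p q) A $ q $ b = - (e*cc) * A$p$b + cc * A$q$b"
  unfolding cj_def R_def rot_right[OF assms(1)] rot_left[OF assms(1)] using assms by simp

lemma sym_entry: "symmetric_mat A \<Longrightarrow> A $ i $ j = A $ j $ i"
proof -
  assume "symmetric_mat A"
  then have "transpose A = A" by (simp add: symmetric_mat_def)
  have "A $ i $ j = transpose A $ j $ i" by (simp add: transpose_def)
  then show ?thesis using \<open>transpose A = A\<close> by simp
qed

lemma alg_p:
  fixes c e x y z :: complex
  assumes "c * c = 1/2" "e * e = 1"
  shows "c * (c * x + (e*c) * y) + (e*c) * (c * y + (e*c) * z) = x + ((z - x)/2 + e * y)"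
proof -
  have "c * (c * x + (e*c) * y) + (e*c) * (c * y + (e*c) * z) = (c*c) * x + 2 * e * (c*c) * y + (e*e) * (c*c) * z"
    by (simp add: algebra_simps)
  also have "\<dots> = (1/2) * x + 2 * e * (1/2) * y + 1 * (1/2) * z" by (simp only: assms)
  also have "\<dots> = x + ((z - x)/2 + e * y)" by (simp add: algebra_simps diff_divide_distrib)
  finally show ?thesis .
qed

lemma alg_q:
  fixes c e x y z :: complex
  assumes "c * c = 1/2" "e * e = 1"
  shows "- (e*c) * (- (e*c) * x + c * y) + c * (- (e*c) * y + c * z) = z + (- ((z - x)/2 + e * y))"
proof -
  have "- (e*c) * (- (e*c) * x + c * y) + c * (- (e*c) * y + c * z) = (e*e) * (c*c) * x - 2 * e * (c*c) * y + (c*c) * z"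
    by (simp add: algebra_simps)
  also have "\<dots> = 1 * (1/2) * x - 2 * e * (1/2) * y + (1/2) * z" by (simp only: assms)
  also have "\<dots> = z + (- ((z - x)/2 + e * y))" by (simp add: algebra_simps diff_divide_distrib)
  finally show ?thesis .
qed



lemma diag_rot:
  assumes "symmetric_mat A" "p \<noteq> q" "e*e = 1"
  shows "diag_vec (cj (R e p q) A) = diag_vec A + vscale (lf e p q A) (uv p q)"
proof (rule vec_eq_iff[THEN iffD2], rule allI)
  fix k
  have s: "A$q$p = A$p$q" using sym_entry[OF assms(1)] .
  show "diag_vec (cj (R e p q) A) $ k = (diag_vec A + vscale (lf e p q A) (uv p q)) $ k"
  proof (cases "k = p")
    case True
    have "diag_vec (cj (R e p q) A) $ p = cj (R e p q) A $ p $ p" by (simp add: diag_vec_def)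
    also have "\<dots> = cc * (cc * A$p$p + (e*cc) * A$p$q) + (e*cc) * (cc * A$p$q + (e*cc) * A$q$q)"
      using cj_R_pp[OF assms(2), of e A] s by simp
    also have "\<dots> = A$p$p + ((A$q$q - A$p$p)/2 + e * A$p$q)"
      by (rule alg_p[OF cc_sq assms(3)])
    also have "\<dots> = (diag_vec A + vscale (lf e p q A) (uv p q)) $ p"
      by (simp add: diag_vec_def uv_def lf_def)
    finally show ?thesis using True by simp
  next
    case False
    show ?thesis
    proof (cases "k = q")
      case True
      have "diag_vec (cj (R e p q) A) $ q = cj (R e p q) A $ q $ q" by (simp add: diag_vec_def)
      also have "\<dots> = - (e*cc) * (- (e*cc) * A$p$p + cc * A$p$q) + cc * (- (e*cc) * A$p$q + cc * A$q$q)"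
        using cj_R_qq[OF assms(2), of e A] s by simp
      also have "\<dots> = A$q$q + (- ((A$q$q - A$p$p)/2 + e * A$p$q))"
        by (rule alg_q[OF cc_sq assms(3)])
      also have "\<dots> = (diag_vec A + vscale (lf e p q A) (uv p q)) $ q"
        using assms(2) by (simp add: diag_vec_def uv_def lf_def)
      finally show ?thesis using True by simp
    next
      case F2: False
      then show ?thesis using False cj_R_oo[OF assms(2) False F2 False F2, of e A]
        by (simp add: diag_vec_def uv_def lf_def)
    qed
  qed
qed

lemma D_subspace: "cmat.subspace L \<Longrightarrow> cv.subspace (diag_vec ` L)"
  by (rule dg.subspace_image)

lemma D_cj_subspace: "cmat.subspace L \<Longrightarrow> cv.subspace (diag_vec ` cj S ` L)"
  by (rule dg.subspace_image, rule cj_subspace)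

lemma diag_decomp:
  assumes "symmetric_mat B" "p \<noteq> q" "e*e = 1"
  shows "diag_vec B = diag_vec (cj (R e p q) B) - vscale (lf e p q B) (uv p q)"
  using diag_rot[OF assms] by simp

lemma dim_insert_notin:
  assumes "cv.subspace D" "u \<notin> D"
  shows "cv.dim (insert u D) = cv.dim D + 1"
proof -
  have sp: "cv.span D = D" using assms(1) by (simp add: cv.span_eq_iff)
  have "u \<notin> cv.span D" unfolding sp by (rule assms(2))
  then show ?thesis using cvf.dim_insert[of u D] by simp
qed

lemma step_up:
  assumes L: "cmat.subspace L" "\<forall>B\<in>L. symmetric_mat B" and pq: "p \<noteq> q"
    and u: "uv p q \<notin> diag_vec ` L" and A: "A \<in> L" "diag_vec A = 0" "A$p$q \<noteq> 0"
  shows "cv.dim (diag_vec ` L) + 1 \<le> cv.dim (diag_vec ` cj (R 1 p q) ` L)"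
proof -
  let ?D = "diag_vec ` L"
  let ?E = "diag_vec ` cj (R 1 p q) ` L"
  have sE: "cv.subspace ?E" by (rule D_cj_subspace[OF L(1)])
  have sD: "cv.subspace ?D" by (rule D_subspace[OF L(1)])
  have z: "A$p$p = 0" "A$q$q = 0"
    using A(2) by (auto simp: diag_vec_def vec_eq_iff)
  have "diag_vec (cj (R 1 p q) A) = vscale (A$p$q) (uv p q)"
    using diag_rot[OF bspec[OF L(2) A(1)] pq, of 1] A(2) z by (simp add: lf_def)
  then have "vscale (A$p$q) (uv p q) \<in> ?E" using A(1) by (metis image_eqI)
  then have "vscale (inverse (A$p$q)) (vscale (A$p$q) (uv p q)) \<in> ?E"
    by (rule cv.subspace_scale[OF sE])
  then have uE: "uv p q \<in> ?E" using A(3) by (simp add: cv.scale_scale)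
  have "?D \<subseteq> ?E"
  proof
    fix x assume "x \<in> ?D"
    then obtain B where B: "B \<in> L" "x = diag_vec B" by auto
    have "x = diag_vec (cj (R 1 p q) B) - vscale (lf 1 p q B) (uv p q)"
      using diag_decomp[OF bspec[OF L(2) B(1)] pq, of 1] B(2) by simp
    also have "\<dots> \<in> ?E"
      by (rule cv.subspace_diff[OF sE]) (use B(1) uE cv.subspace_scale[OF sE] in auto)
    finally show "x \<in> ?E" .
  qed
  with uE have "insert (uv p q) ?D \<subseteq> ?E" by auto
  then have "cv.dim (insert (uv p q) ?D) \<le> cv.dim ?E" by (rule cvf.dim_subset)
  then show ?thesis using dim_insert_notin[OF sD u] by simp
qed

lemma no_decrease:
  assumes L: "cmat.subspace L" "\<forall>B\<in>L. symmetric_mat B" and pq: "p \<noteq> q" and e: "e * e = 1"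
    and u: "uv p q \<notin> diag_vec ` L"
  shows "cv.dim (diag_vec ` L) \<le> cv.dim (diag_vec ` cj (R e p q) ` L)"
proof -
  let ?D = "diag_vec ` L"
  let ?E = "diag_vec ` cj (R e p q) ` L"
  have sD: "cv.subspace ?D" by (rule D_subspace[OF L(1)])
  have "insert (uv p q) ?D \<subseteq> cv.span (insert (uv p q) ?E)"
  proof
    fix x assume "x \<in> insert (uv p q) ?D"
    then show "x \<in> cv.span (insert (uv p q) ?E)"
    proof
      assume "x = uv p q" then show ?thesis by (simp add: cv.span_base)
    next
      assume "x \<in> ?D"
      then obtain B where B: "B \<in> L" "x = diag_vec B" by auto
      have "x = diag_vec (cj (R e p q) B) - vscale (lf e p q B) (uv p q)"
        using diag_decomp[OF bspec[OF L(2) B(1)] pq e] B(2) by simp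
      also have "\<dots> \<in> cv.span (insert (uv p q) ?E)"
        by (intro cv.span_diff cv.span_scale cv.span_base) (use B(1) in auto)
      finally show ?thesis .
    qed
  qed
  then have "cv.dim (insert (uv p q) ?D) \<le> cv.dim (insert (uv p q) ?E)" by (rule cvf.dim_mono)
  also have "\<dots> \<le> cv.dim ?E + 1" using cvf.dim_insert[of "uv p q" ?E] by simp
  finally show ?thesis using dim_insert_notin[OF sD u] by simp
qed



lemma uv_comb1:
  assumes "i \<noteq> j" "m \<noteq> i" "m \<noteq> j"
  shows "uv i j - uv m j = uv i m"
  using assms by (auto simp: vec_eq_iff uv_def)

lemma uv_comb2:
  assumes "i \<noteq> j" "m \<noteq> i" "m \<noteq> j"
  shows "(uv m j - vscale \<mu> (uv i m)) + vscale \<mu> (uv i j) = vscale (1 + \<mu>) (uv m j)"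
  using assms by (auto simp: vec_eq_iff uv_def algebra_simps)

lemma uv_comb3:
  assumes "i \<noteq> j" "m \<noteq> i" "m \<noteq> j"
  shows "uv m j - vscale (-1) (uv i m) = uv i j"
  using assms by (auto simp: vec_eq_iff uv_def)

lemma full_of_uv:
  assumes sD: "cv.subspace D" and d0: "d0 \<in> D" "(\<Sum>k\<in>UNIV. d0 $ k) \<noteq> 0"
    and all: "\<And>m. m \<noteq> i \<Longrightarrow> uv i m \<in> D"
  shows "D = (UNIV :: (complex^'n::finite) set)"
proof -
  { fix x :: "complex^'n"
    define t where "t = (\<Sum>k\<in>UNIV. d0 $ k)"
    define y where "y = x - vscale ((\<Sum>k\<in>UNIV. x $ k) / t) d0"
    have "(\<Sum>k\<in>UNIV. y $ k) = (\<Sum>k\<in>UNIV. x $ k) - ((\<Sum>k\<in>UNIV. x $ k) / t) * t"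
      by (simp add: y_def sum_subtractf sum_distrib_left t_def)
    then have sy: "(\<Sum>k\<in>UNIV. y $ k) = 0" using d0(2) by (simp add: t_def)
    have rem: "(\<Sum>k\<in>UNIV. y $ k) = y $ i + (\<Sum>k\<in>UNIV - {i}. y $ k)"
      by (simp add: sum.remove)
    have yeq: "y = (\<Sum>m\<in>UNIV - {i}. vscale (- y $ m) (uv i m))"
    proof (rule vec_eq_iff[THEN iffD2], rule allI)
      fix k
      show "y $ k = (\<Sum>m\<in>UNIV - {i}. vscale (- y $ m) (uv i m)) $ k"
      proof (cases "k = i")
        case True
        have "(\<Sum>m\<in>UNIV - {i}. vscale (- y $ m) (uv i m)) $ k = (\<Sum>m\<in>UNIV - {i}. - y $ m)"
          unfolding cv_sum_nth using True by (intro sum.cong) (auto simp: uv_def)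
        also have "\<dots> = y $ i"
        proof -
          have "y $ i + (\<Sum>m\<in>UNIV - {i}. y $ m) = 0" using sy rem by simp
          then have "(\<Sum>m\<in>UNIV - {i}. y $ m) = - y $ i" by (simp add: add_eq_0_iff)
          then show ?thesis by (simp add: sum_negf)
        qed
        finally show ?thesis using True by simp
      next
        case False
        have "(\<Sum>m\<in>UNIV - {i}. vscale (- y $ m) (uv i m)) $ k
            = (\<Sum>m\<in>UNIV - {i}. if m = k then y $ k else 0)"
          unfolding cv_sum_nth using False by (intro sum.cong) (auto simp: uv_def)
        also have "\<dots> = y $ k" using False by (simp add: sum.delta')
        finally show ?thesis by simp
      qed
    qed
    have "y \<in> D"
      by (subst yeq, intro cv.subspace_sum[OF sD] cv.subspace_scale[OF sD] all) auto
    moreover have "vscale ((\<Sum>k\<in>UNIV. x $ k) / t) d0 \<in> D"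
      by (rule cv.subspace_scale[OF sD d0(1)])
    ultimately have "y + vscale ((\<Sum>k\<in>UNIV. x $ k) / t) d0 \<in> D"
      by (rule cv.subspace_add[OF sD])
    then have "x \<in> D" by (simp add: y_def) }
  then show ?thesis by auto
qed


lemma key_B:
  assumes L: "cmat.subspace L" "\<forall>B\<in>L. symmetric_mat B"
    and ij: "i \<noteq> j" and mi: "m \<noteq> i" and mj: "m \<noteq> j" and e: "e * e = 1"
    and uij: "uv i j \<in> diag_vec ` L" and umj: "uv m j \<notin> diag_vec ` L"
    and inE: "uv m j \<in> diag_vec ` cj (R e i m) ` L"
  shows "\<exists>B\<in>L. diag_vec B = uv i j \<and> e * B$i$m = - 1/2"
proof -
  let ?D = "diag_vec ` L"
  have sD: "cv.subspace ?D" by (rule D_subspace[OF L(1)])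
  obtain B where B: "B \<in> L" "diag_vec (cj (R e i m) B) = uv m j" using inE by auto
  define \<mu> where "\<mu> = lf e i m B"
  have im: "i \<noteq> m" using mi by simp
  have dB: "diag_vec B = uv m j - vscale \<mu> (uv i m)"
    using diag_decomp[OF bspec[OF L(2) B(1)] im e] B(2) by (simp add: \<mu>_def)
  have mu: "\<mu> = -1"
  proof (rule ccontr)
    assume nm: "\<mu> \<noteq> -1"
    have "diag_vec B + vscale \<mu> (uv i j) \<in> ?D"
      by (rule cv.subspace_add[OF sD]) (use B(1) cv.subspace_scale[OF sD uij] in auto)
    also have "diag_vec B + vscale \<mu> (uv i j) = vscale (1 + \<mu>) (uv m j)"
      unfolding dB by (rule uv_comb2[OF ij mi mj])
    finally have "vscale (inverse (1 + \<mu>)) (vscale (1 + \<mu>) (uv m j)) \<in> ?D"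
      by (rule cv.subspace_scale[OF sD])
    moreover have "1 + \<mu> \<noteq> 0" using nm by (simp add: add_eq_0_iff)
    ultimately have "uv m j \<in> ?D" by (simp add: cv.scale_scale)
    then show False using umj by simp
  qed
  have dB2: "diag_vec B = uv i j" using dB mu uv_comb3[OF ij mi mj] by simp
  have Bii: "B$i$i = 1" using dB2 by (simp add: vec_eq_iff diag_vec_def uv_def)
  have Bmm: "B$m$m = 0" using dB2 mi mj by (simp add: vec_eq_iff diag_vec_def uv_def)
  have "(B$m$m - B$i$i) / 2 + e * B$i$m = -1" using mu by (simp add: \<mu>_def lf_def)
  then have "e * B$i$m = - 1/2" using Bii Bmm by (simp add: field_simps)
  then show ?thesis using B(1) dB2 by blast
qed

lemma rank_up:
  assumes L: "cmat.subspace L" "\<forall>B\<in>L. symmetric_mat B" and t: "A0 \<in> L" "trace A0 \<noteq> 0"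
    and K: "A \<in> L" "A \<noteq> 0" "diag_vec A = 0" and Dn: "diag_vec ` L \<noteq> UNIV"
  shows "\<exists>S. complex_orthogonal S \<and> cv.dim (diag_vec ` L) < cv.dim (diag_vec ` cj S ` L)"
proof -
  let ?D = "diag_vec ` L"
  have sD: "cv.subspace ?D" by (rule D_subspace[OF L(1)])
  obtain i j where Aij: "A$i$j \<noteq> 0" using K(2) by (auto simp: vec_eq_iff)
  have ij: "i \<noteq> j" using Aij K(3) by (auto simp: vec_eq_iff diag_vec_def)
  have o1: "\<And>p q. p \<noteq> q \<Longrightarrow> complex_orthogonal (R 1 p q)" by (rule R_orth) auto
  show ?thesis
  proof (cases "uv i j \<in> ?D")
    case False
    from step_up[OF L ij False K(1) K(3) Aij] o1[OF ij] show ?thesis by force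
  next
    case uij: True
    obtain m where mi: "m \<noteq> i" and uim: "uv i m \<notin> ?D"
    proof -
      have "\<exists>m. m \<noteq> i \<and> uv i m \<notin> ?D"
      proof (rule ccontr)
        assume "\<not> ?thesis"
        then have "\<And>m. m \<noteq> i \<Longrightarrow> uv i m \<in> ?D" by blast
        moreover have "diag_vec A0 \<in> ?D" using t(1) by simp
        moreover have "(\<Sum>k\<in>UNIV. diag_vec A0 $ k) \<noteq> 0"
          using t(2) by (simp add: trace_def diag_vec_def)
        ultimately have "?D = UNIV" using full_of_uv[OF sD] by blast
        then show False using Dn by simp
      qed
      then show ?thesis using that by blast
    qed
    have mj: "m \<noteq> j" using uim uij by auto
    have im: "i \<noteq> m" using mi by simp
    show ?thesis
    proof (cases "A$i$m \<noteq> 0")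
      case True
      from step_up[OF L im uim K(1) K(3) True] o1[OF im] show ?thesis by force
    next
      case Aim: False
      show ?thesis
      proof (cases "A$m$j \<noteq> 0")
        case True
        have umj: "uv m j \<notin> ?D"
        proof
          assume "uv m j \<in> ?D"
          then have "uv i j - uv m j \<in> ?D" by (rule cv.subspace_diff[OF sD uij])
          then show False using uv_comb1[OF ij mi mj] uim by simp
        qed
        from step_up[OF L mj umj K(1) K(3) True] o1[OF mj] show ?thesis by force
      next
        case Amj: False
        have umj: "uv m j \<notin> ?D"
        proof
          assume "uv m j \<in> ?D"
          then have "uv i j - uv m j \<in> ?D" by (rule cv.subspace_diff[OF sD uij])
          then show False using uv_comb1[OF ij mi mj] uim by simp
        qed
        have case_e: "(\<exists>S. complex_orthogonal S \<and> cv.dim ?D < cv.dim (diag_vec ` cj S ` L))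
            \<or> uv m j \<in> diag_vec ` cj (R e i m) ` L" if e: "e * e = 1" for e
        proof (cases "uv m j \<in> diag_vec ` cj (R e i m) ` L")
          case True then show ?thesis by blast
        next
          case nE: False
          let ?L = "cj (R e i m) ` L"
          have oe: "complex_orthogonal (R e i m)" by (rule R_orth[OF im e])
          have L1: "cmat.subspace ?L" by (rule cj_subspace[OF L(1)])
          have L2: "\<forall>B\<in>?L. symmetric_mat B" using L(2) cj_sym by blast
          have Ae: "cj (R e i m) A \<in> ?L" using K(1) by simp
          have z: "A$i$i = 0" "A$m$m = 0" using K(3) by (auto simp: vec_eq_iff diag_vec_def)
          have dAe: "diag_vec (cj (R e i m) A) = 0"
            using diag_rot[OF bspec[OF L(2) K(1)] im e] K(3) z Aim by (simp add: lf_def)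
          have e0: "e \<noteq> 0" using e by auto
          have "cj (R e i m) A $ m $ j = - (e*cc) * A$i$j + cc * A$m$j"
            by (rule cj_R_qo[OF im ij[symmetric] mj[symmetric]])
          then have Aemj: "cj (R e i m) A $ m $ j \<noteq> 0" using Amj Aij e0 cc_nz by simp
          have st: "cv.dim (diag_vec ` ?L) + 1 \<le> cv.dim (diag_vec ` cj (R 1 m j) ` ?L)"
            by (rule step_up[OF L1 L2 mj nE Ae dAe Aemj])
          have nd: "cv.dim ?D \<le> cv.dim (diag_vec ` ?L)"
            by (rule no_decrease[OF L im e uim])
          have eq: "cj (R 1 m j) ` ?L = cj (R 1 m j ** R e i m) ` L"
            by (simp add: image_image cj_cj)
          have "complex_orthogonal (R 1 m j ** R e i m)"
            by (rule orth_mult[OF o1[OF mj] oe])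
          moreover have "cv.dim ?D < cv.dim (diag_vec ` cj (R 1 m j ** R e i m) ` L)"
            using st nd unfolding eq by simp
          ultimately show ?thesis by blast
        qed
        show ?thesis
        proof (cases "uv m j \<in> diag_vec ` cj (R 1 i m) ` L \<and> uv m j \<in> diag_vec ` cj (R (-1) i m) ` L")
          case False
          then show ?thesis using case_e[of 1] case_e[of "-1"] by auto
        next
          case True
          obtain B1 where B1: "B1 \<in> L" "diag_vec B1 = uv i j" "1 * B1$i$m = - 1/2"
            using key_B[OF L ij mi mj _ uij umj, of 1] True by auto
          obtain B2 where B2: "B2 \<in> L" "diag_vec B2 = uv i j" "(-1) * B2$i$m = - 1/2"
            using key_B[OF L ij mi mj _ uij umj, of "-1"] True by auto
          have C: "B1 - B2 \<in> L" using B1(1) B2(1) by (rule cmat.subspace_diff[OF L(1)])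
          have dC: "diag_vec (B1 - B2) = 0" using B1(2) B2(2) by (simp add: dg.diff)
          have "- B2$i$m = - (1/2)" using B2(3) by simp
          then have b2: "B2$i$m = 1/2" by (simp only: neg_equal_iff_equal)
          have b1: "B1$i$m = - (1/2)" using B1(3) by simp
          have "(B1 - B2)$i$m = - (1/2) - 1/2" by (simp only: vector_minus_component b1 b2)
          also have "\<dots> = -1" by simp
          finally have Cim: "(B1 - B2)$i$m \<noteq> 0" by simp
          from step_up[OF L im uim C dC Cim] o1[OF im] show ?thesis by force
        qed
      qed
    qed
  qed
qed



lemma basis_of:
  assumes "cmat.subspace L" "cmat.dim L = CARD('n::finite)"
  obtains B :: "(complex^'n^'n) set" where "finite B" "card B = CARD('n)" "cmat.independent B"
    "cmat.span B = L" "B \<subseteq> L"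
proof -
  obtain B where B: "B \<subseteq> L" "cmat.independent B" "L \<subseteq> cmat.span B" "card B = cmat.dim L"
    using cmat.basis_exists by blast
  have "finite B" using B(4) assms(2) by (metis card_ge_0_finite zero_less_card_finite)
  moreover have "cmat.span B = L"
    using B(1,3) assms(1) by (metis cmat.span_eq_iff cmat.span_mono subset_antisym)
  ultimately show ?thesis using that B assms(2) by auto
qed

lemma dimUNIV: "cv.dim (UNIV :: (complex^'n::finite) set) = CARD('n)"
  using cvf.dim_UNIV card_axis by simp

lemma dim_le_CARD: "cv.dim (S :: (complex^'n::finite) set) \<le> CARD('n)"
  using cvf.dim_subset_UNIV[of S] card_axis[where 'n='n] by (simp add: cvf.dimension_def)

lemma inj_full:
  assumes L: "cmat.subspace L" "cmat.dim L = CARD('n::finite)"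
    and inj: "inj_on diag_vec (L :: (complex^'n^'n) set)"
  shows "diag_vec ` L = UNIV"
proof -
  obtain B where B: "finite B" "card B = CARD('n)" "cmat.independent B" "cmat.span B = L" "B \<subseteq> L"
    using basis_of[OF L] by blast
  have ind: "cv.independent (diag_vec ` B)"
    by (rule dg.independent_injective_image[OF B(3)]) (use inj B(4) in simp)
  have card: "card (diag_vec ` B) = CARD('n)"
    using B(2,5) inj by (metis card_image inj_on_subset)
  have "UNIV \<subseteq> cv.span (diag_vec ` B)"
    using cvf.card_eq_dim[of "diag_vec ` B" UNIV] ind card B(1) dimUNIV[where 'n='n] by simp
  then have "cv.span (diag_vec ` B) = UNIV" by auto
  then show ?thesis using B(4) by (simp add: dg.span_image)
qed

lemma full_inj:
  assumes L: "cmat.subspace L" "cmat.dim L = CARD('n::finite)"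
    and full: "diag_vec ` (L :: (complex^'n^'n) set) = UNIV"
  shows "inj_on diag_vec L"
proof -
  obtain B where B: "finite B" "card B = CARD('n)" "cmat.independent B" "cmat.span B = L" "B \<subseteq> L"
    using basis_of[OF L] by blast
  have sp: "cv.span (diag_vec ` B) = UNIV" using full B(4) by (simp add: dg.span_image)
  have cle: "card (diag_vec ` B) \<le> CARD('n)" using B(1,2) card_image_le by metis
  have ind: "cv.independent (diag_vec ` B)"
    by (rule cvf.card_le_dim_spanning[of _ UNIV]) (use sp cle B(1) dimUNIV[where 'n='n] in auto)
  have "card (diag_vec ` B) = cv.dim (cv.span (diag_vec ` B))"
    using cv.dim_span_eq_card_independent[OF ind] by simp
  then have "card (diag_vec ` B) = card B" using sp dimUNIV[where 'n='n] B(2) by simp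
  then have "inj_on diag_vec B" using B(1) by (simp add: inj_on_iff_eq_card)
  then have "inj_on diag_vec (cmat.span B)"
    by (rule dg.inj_on_span_independent_image[OF ind])
  then show ?thesis using B(4) by simp
qed

theorem lemma3:
  fixes \<L> :: "(complex^'n^'n) set"
  assumes "cmat.subspace \<L>"
    and "cmat.dim \<L> = CARD('n)"
    and "\<forall>A\<in>\<L>. symmetric_mat A"
    and "\<exists>A\<in>\<L>. trace A \<noteq> 0"
  shows "\<exists>S. complex_orthogonal S \<and>
           bij_betw diag_vec ((\<lambda>A. S ** A ** matrix_inv S) ` \<L>) (UNIV :: (complex^'n) set)"
proof -
  define f where "f S = cv.dim (diag_vec ` cj S ` \<L>)" for S
  let ?V = "f ` {S. complex_orthogonal S}"
  have Vb: "?V \<subseteq> {..CARD('n)}"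
    using dim_le_CARD by (auto simp: f_def)
  then have finV: "finite ?V" by (rule finite_subset) simp
  have neV: "?V \<noteq> {}" using orth_one by auto
  obtain S0 where S0: "complex_orthogonal S0" "f S0 = Max ?V"
    using Max_in[OF finV neV] by auto
  have maxS: "f S \<le> f S0" if "complex_orthogonal S" for S
    using S0(2) Max_ge[OF finV] that by auto
  let ?L = "cj S0 ` \<L>"
  have L1: "cmat.subspace ?L" by (rule cj_subspace[OF assms(1)])
  have L2: "\<forall>B\<in>?L. symmetric_mat B" using assms(3) cj_sym by blast
  have Ld: "cmat.dim ?L = CARD('n)" using cj_dim[OF S0(1)] assms(2) by simp
  obtain A0 where A0: "A0 \<in> \<L>" "trace A0 \<noteq> 0" using assms(4) by blast
  have A0': "cj S0 A0 \<in> ?L" "trace (cj S0 A0) \<noteq> 0" using A0 cj_trace[OF S0(1)] by auto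
  have full: "diag_vec ` ?L = UNIV"
  proof (rule ccontr)
    assume nf: "diag_vec ` ?L \<noteq> UNIV"
    have "\<not> inj_on diag_vec ?L" using inj_full[OF L1 Ld] nf by blast
    then obtain A where A: "A \<in> ?L" "A \<noteq> 0" "diag_vec A = 0"
      using dg.inj_on_iff_eq_0[OF L1] by blast
    obtain S1 where S1: "complex_orthogonal S1"
      "cv.dim (diag_vec ` ?L) < cv.dim (diag_vec ` cj S1 ` ?L)"
      using rank_up[OF L1 L2 A0' A nf] by blast
    have "cj S1 ` ?L = cj (S1 ** S0) ` \<L>" by (simp add: image_image cj_cj)
    then have "f S0 < f (S1 ** S0)" using S1(2) by (simp add: f_def)
    moreover have "f (S1 ** S0) \<le> f S0" by (rule maxS[OF orth_mult[OF S1(1) S0(1)]])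
    ultimately show False by simp
  qed
  have inj: "inj_on diag_vec ?L" by (rule full_inj[OF L1 Ld full])
  have eq: "(\<lambda>A. S0 ** A ** matrix_inv S0) ` \<L> = ?L"
    by (simp add: orth_inv[OF S0(1)] cj_def)
  have "bij_betw diag_vec ((\<lambda>A. S0 ** A ** matrix_inv S0) ` \<L>) (UNIV :: (complex^'n) set)"
    unfolding eq bij_betw_def using inj full by blast
  then show ?thesis using S0(1) by blast
qed


end
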